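(* Consider the control system $\dot y(t)=f(y(t),u(t))$ a.e., $u(t)\in\mathcal U$ a.e., $y(0)=x$, where $\mathcal U\subset\mathbb R^M$ is nonempty and compact, and assume: (i) the set $\{f(x,u):u\in\mathcal U\}$ is convex for every $x\in\mathbb R^N$; (ii) $f:\mathbb R^N\times\mathcal U\to\mathbb R^N$ is continuous and $\|f(x,u)-f(y,u)\|\le L\|x-y\|$ for all $x,y\in\mathbb R^N$, $u\in\mathcal U$, for some $L>0$; moreover the differential $D_xf$ of $f$ with respect to $x$ exists everywhere, is continuous in $(x,u)$, and satisfies $\|D_xf(x,u)-D_xf(y,u)\|\le L_1\|x-y\|$ for all $x,y\in\mathbb R^N$, $u\in\mathcal U$, for some $L_1>0$. Let $x\in\mathbb R^N\setminus\{0\}$ and let $T(x)$ be the minimum time to reach the origin from $x$. Assume there is a neighborhood $\mathcal V$ of $x$ such that: (1) $T$ is finite and continuous in $\mathcal V$; (2) every $y\in\mathcal V$ is an optimal point; (3) for every $y\in\mathcal V$ the optimal control steering $y$ to the origin is unique and bang-bang with finitely many switchings; (4) there exists $r>T(x)$ such that $\mathcal R_t$ has locally positive reach for all $t<r$. Let $\zeta\in N_{\mathcal R_{T(x)}}(x)$. Then (a) $h(x,\zeta)\le 0$, and (b) $(\zeta,h(x,\zeta))\in N_{\mathrm{epi}(T)}(x,T(x))$.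
   Context: Admissible controls are measurable $u:[0,\infty)\to\mathcal U$; $y^{x,u}$ denotes the (unique Carathéodory) trajectory from $x$ with control $u$. The minimum time is $T(x)=\inf\{\theta\ge0: y^{x,u}(\theta)=0 \text{ for some admissible } u\}$, and $\mathcal R_t=\{x: T(x)\le t\}$. The minimized Hamiltonian is $h(x,p)=\min_{u\in\mathcal U}\langle p,f(x,u)\rangle$. A point $x\neq0$ is an optimal point if there exist $x_1$ with $T(x_1)>T(x)$ and a control $u$ such that $y^{x_1,u}$ steers $x_1$ to the origin in the optimal time $T(x_1)$ and $y^{x_1,u}(T(x_1)-T(x))=x$. For a closed set $K$ and $x\in K$, $v\in N_K(x)$ (proximal normal cone) iff there is $\sigma\ge0$ with $\langle v,y-x\rangle\le\sigma\|y-x\|^2$ for all $y\in K$. A locally closed set $K$ has locally positive reach if there is a continuous $\varphi:K\to[0,\infty)$ with $\langle v,y-x\rangle\le\varphi(x)\|v\|\|y-x\|^2$ for all $x,y\in K$, $v\in N_K(x)$. $\mathrm{epi}(T)=\{(y,\beta):\beta\ge T(y)\}$. A bang-bang control with finitely many switchings is piecewise constant with values in the extreme points of $\mathcal U$ and finitely many jumps. *)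

theory Defs
  imports "HOL-Analysis.Analysis"
begin

definition admissible_control :: "(real ^ 'm) set \<Rightarrow> (real \<Rightarrow> real ^ 'm) \<Rightarrow> bool" where
  "admissible_control U u \<longleftrightarrow>
     u \<in> borel_measurable (lebesgue_on {0..}) \<and> (\<forall>t\<ge>0. u t \<in> U)"

text \<open>Caratheodory trajectory on [0,\<infinity>) from x with control u (integral form).\<close>
definition is_trajectory ::
  "(real ^ 'n \<Rightarrow> real ^ 'm \<Rightarrow> real ^ 'n) \<Rightarrow> real ^ 'n \<Rightarrow> (real \<Rightarrow> real ^ 'm) \<Rightarrow> (real \<Rightarrow> real ^ 'n) \<Rightarrow> bool" where
  "is_trajectory f x u y \<longleftrightarrow>
     (\<forall>t\<ge>0. (\<lambda>s. f (y s) (u s)) integrable_on {0..t} \<and>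
             y t = x + integral {0..t} (\<lambda>s. f (y s) (u s)))"

definition min_time ::
  "(real ^ 'n \<Rightarrow> real ^ 'm \<Rightarrow> real ^ 'n) \<Rightarrow> (real ^ 'm) set \<Rightarrow> real ^ 'n \<Rightarrow> ereal" where
  "min_time f U x = Inf (ereal ` {\<theta>. \<theta> \<ge> 0 \<and>
      (\<exists>u y. admissible_control U u \<and> is_trajectory f x u y \<and> y \<theta> = 0)})"

definition reach_set ::
  "(real ^ 'n \<Rightarrow> real ^ 'm \<Rightarrow> real ^ 'n) \<Rightarrow> (real ^ 'm) set \<Rightarrow> ereal \<Rightarrow> (real ^ 'n) set" where
  "reach_set f U t = {x. min_time f U x \<le> t}"

definition min_hamiltonian ::
  "(real ^ 'n \<Rightarrow> real ^ 'm \<Rightarrow> real ^ 'n) \<Rightarrow> (real ^ 'm) set \<Rightarrow> real ^ 'n \<Rightarrow> real ^ 'n \<Rightarrow> real" where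
  "min_hamiltonian f U x p = Inf ((\<lambda>u. p \<bullet> f x u) ` U)"

definition optimal_control ::
  "(real ^ 'n \<Rightarrow> real ^ 'm \<Rightarrow> real ^ 'n) \<Rightarrow> (real ^ 'm) set \<Rightarrow> real ^ 'n \<Rightarrow> (real \<Rightarrow> real ^ 'm) \<Rightarrow> bool" where
  "optimal_control f U x u \<longleftrightarrow> admissible_control U u \<and>
     (\<exists>t y. min_time f U x = ereal t \<and> is_trajectory f x u y \<and> y t = 0)"

definition optimal_point ::
  "(real ^ 'n \<Rightarrow> real ^ 'm \<Rightarrow> real ^ 'n) \<Rightarrow> (real ^ 'm) set \<Rightarrow> real ^ 'n \<Rightarrow> bool" where
  "optimal_point f U x \<longleftrightarrow> x \<noteq> 0 \<and>
     (\<exists>x1 u y t1. min_time f U x1 = ereal t1 \<and> min_time f U x1 > min_time f U x \<and>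
        admissible_control U u \<and> is_trajectory f x1 u y \<and> y t1 = 0 \<and>
        y (t1 - real_of_ereal (min_time f U x)) = x)"

definition bang_bang_on :: "(real ^ 'm) set \<Rightarrow> real \<Rightarrow> (real \<Rightarrow> real ^ 'm) \<Rightarrow> bool" where
  "bang_bang_on U T u \<longleftrightarrow> (\<exists>S. finite S \<and>
     (\<forall>t\<in>{0..T} - S. u t extreme_point_of U) \<and>
     (\<forall>s t. 0 \<le> s \<and> s \<le> t \<and> t \<le> T \<and> {s..t} \<inter> S = {} \<longrightarrow> u s = u t))"

definition proximal_normal :: "'a::real_inner set \<Rightarrow> 'a \<Rightarrow> 'a set" where
  "proximal_normal K x = {v. \<exists>\<sigma>\<ge>0. \<forall>y\<in>K. inner v (y - x) \<le> \<sigma> * (norm (y - x))\<^sup>2}"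

definition locally_closed :: "'a::metric_space set \<Rightarrow> bool" where
  "locally_closed K \<longleftrightarrow> (\<forall>x\<in>K. \<exists>e>0. closed (K \<inter> cball x e))"

definition locally_positive_reach :: "'a::real_inner set \<Rightarrow> bool" where
  "locally_positive_reach K \<longleftrightarrow> locally_closed K \<and>
     (\<exists>\<phi>. continuous_on K \<phi> \<and> (\<forall>x\<in>K. \<phi> x \<ge> (0::real)) \<and>
        (\<forall>x\<in>K. \<forall>y\<in>K. \<forall>v\<in>proximal_normal K x.
           inner v (y - x) \<le> \<phi> x * norm v * (norm (y - x))\<^sup>2))"

definition epigraph :: "('a \<Rightarrow> ereal) \<Rightarrow> ('a \<times> real) set" where
  "epigraph T = {(y, \<beta>). T y \<le> ereal \<beta>}"

end

theory Submission
  imports Defs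
begin

lemma min_time_le:
  assumes "admissible_control U u" "is_trajectory f x u y" "0 \<le> \<theta>" "y \<theta> = 0"
  shows "min_time f U x \<le> ereal \<theta>"
  unfolding min_time_def using assms by (intro Inf_lower) blast

lemma min_time_nonneg: "0 \<le> min_time f U x"
  unfolding min_time_def by (intro Inf_greatest) auto

lemma min_time_lt:
  assumes "min_time f U x < ereal c"
  shows "\<exists>\<theta> u y. 0 \<le> \<theta> \<and> \<theta> < c \<and> admissible_control U u \<and> is_trajectory f x u y \<and> y \<theta> = 0"
  using assms unfolding min_time_def by (auto simp: Inf_less_iff)

lemma traj_0: "is_trajectory f x u y \<Longrightarrow> y 0 = x"
  unfolding is_trajectory_def by (metis order_refl integral_refl cbox_interval add_0_right
     integral_singleton atLeastAtMost_singleton)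

lemma traj_int: "is_trajectory f x u y \<Longrightarrow> 0 \<le> t \<Longrightarrow> (\<lambda>s. f (y s) (u s)) integrable_on {0..t}"
  unfolding is_trajectory_def by blast

lemma traj_eq: "is_trajectory f x u y \<Longrightarrow> 0 \<le> t \<Longrightarrow> y t = x + integral {0..t} (\<lambda>s. f (y s) (u s))"
  unfolding is_trajectory_def by blast

lemma traj_cont:
  assumes "is_trajectory f x u y" "0 \<le> a"
  shows "continuous_on {0..a} y"
proof -
  have "continuous_on {0..a} (\<lambda>t. x + integral {0..t} (\<lambda>s. f (y s) (u s)))"
    by (intro continuous_intros indefinite_integral_continuous_1 traj_int[OF assms])
  then show ?thesis
    by (rule continuous_on_eq) (use traj_eq[OF assms(1)] in auto)
qed

lemma meas_pre:
  fixes u :: "real \<Rightarrow> real ^ 'm"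
  shows "u \<in> borel_measurable (lebesgue_on {0..}) \<longleftrightarrow>
     (\<forall>T. T \<in> sets borel \<longrightarrow> {x \<in> {0..}. u x \<in> T} \<in> sets lebesgue)"
  by (rule borel_measurable_lebesgue_on_preimage_borel) auto

lemma shift_adm:
  fixes u :: "real \<Rightarrow> real ^ 'm"
  assumes "admissible_control U u" "0 \<le> a"
  shows "admissible_control U (\<lambda>t. u (t + a))"
proof -
  have m: "\<forall>T. T \<in> sets borel \<longrightarrow> {x \<in> {0..}. u x \<in> T} \<in> sets lebesgue"
    using assms(1) unfolding admissible_control_def meas_pre by blast
  have "{x \<in> {0..}. u (x + a) \<in> T} \<in> sets lebesgue" if "T \<in> sets borel" for T
  proof -
    have e: "{x \<in> {0..}. u (x + a) \<in> T} = (+) (-a) ` ({x \<in> {0..}. u x \<in> T} \<inter> {a..})"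
    proof (rule set_eqI, rule iffI)
      fix x :: real assume "x \<in> {x \<in> {0..}. u (x + a) \<in> T}"
      then show "x \<in> (+) (-a) ` ({x \<in> {0..}. u x \<in> T} \<inter> {a..})"
        using assms(2) by (intro image_eqI[where x="x + a"]) auto
    next
      fix x :: real assume "x \<in> (+) (-a) ` ({x \<in> {0..}. u x \<in> T} \<inter> {a..})"
      then show "x \<in> {x \<in> {0..}. u (x + a) \<in> T}" by auto
    qed
    show ?thesis unfolding e
      by (intro lebesgue_sets_translation sets.Int m[rule_format] that) auto
  qed
  then show ?thesis using assms unfolding admissible_control_def meas_pre by auto
qed

lemma shift_traj:
  assumes "is_trajectory f x u y" "0 \<le> a"
  shows "is_trajectory f (y a) (\<lambda>t. u (t + a)) (\<lambda>t. y (t + a))"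
  unfolding is_trajectory_def
proof (intro allI impI conjI)
  fix t :: real assume t: "0 \<le> t"
  let ?g = "\<lambda>s. f (y s) (u s)"
  have i: "?g integrable_on {0..t+a}" using traj_int[OF assms(1)] t assms(2) by auto
  have ia: "?g integrable_on {a..t+a}" by (rule integrable_subinterval_real[OF i]) (use assms(2) in auto)
  from integrable_shift_real_ivl[OF ia, where c=a]
  show "(\<lambda>s. f (y (s + a)) (u (s + a))) integrable_on {0..t}" by simp
  have "integral {0..t} (\<lambda>s. f (y (s + a)) (u (s + a))) = integral {a..t+a} ?g"
    using integral_shift_real_ivl[where f="?g" and a=a and c=a and b="t+a"] by simp
  moreover have "integral {0..a} ?g + integral {a..t+a} ?g = integral {0..t+a} ?g"
    by (rule Henstock_Kurzweil_Integration.integral_combine[OF _ _ i]) (use assms(2) t in auto)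
  moreover have "y a = x + integral {0..a} ?g" "y (t+a) = x + integral {0..t+a} ?g"
    using traj_eq[OF assms(1)] assms(2) t by auto
  ultimately show "y (t + a) = y a + integral {0..t} (\<lambda>s. f (y (s + a)) (u (s + a)))"
    by (simp add: algebra_simps)
qed

lemma min_time_shift:
  assumes "admissible_control U u" "is_trajectory f x u y" "y \<theta> = 0" "0 \<le> a" "a \<le> \<theta>"
  shows "min_time f U (y a) \<le> ereal (\<theta> - a)"
  using min_time_le[OF shift_adm[OF assms(1,4)] shift_traj[OF assms(2,4)], of "\<theta> - a"] assms
  by simp

lemma prepend:
  fixes f :: "real ^ 'n \<Rightarrow> real ^ 'm \<Rightarrow> real ^ 'n" and u :: "real \<Rightarrow> real ^ 'm"
  assumes u0: "u0 \<in> U" and s: "0 \<le> s"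
    and phi: "\<forall>r\<in>{0..s}. \<phi> r = w + integral {0..r} (\<lambda>\<rho>. f (\<phi> \<rho>) u0)"
    and phi_int: "(\<lambda>\<rho>. f (\<phi> \<rho>) u0) integrable_on {0..s}"
    and adm: "admissible_control U u" and tr: "is_trajectory f (\<phi> s) u Y"
    and Y0: "Y \<theta> = 0" and th: "0 \<le> \<theta>"
  shows "min_time f U w \<le> ereal (s + \<theta>)"
proof -
  define u' where "u' t = (if t < s then u0 else u (t - s))" for t
  define Y' where "Y' t = (if t \<le> s then \<phi> t else Y (t - s))" for t
  have m: "\<forall>T. T \<in> sets borel \<longrightarrow> {x \<in> {0..}. u x \<in> T} \<in> sets lebesgue"
    using adm unfolding admissible_control_def meas_pre by blast
  have "{x \<in> {0..}. u' x \<in> T} \<in> sets lebesgue" if T: "T \<in> sets borel" for T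
  proof -
    have e: "{x \<in> {0..}. u' x \<in> T} = (if u0 \<in> T then {0..<s} else {}) \<union> (+) s ` {x \<in> {0..}. u x \<in> T}"
    proof (rule set_eqI, rule iffI)
      fix x :: real assume x: "x \<in> {x \<in> {0..}. u' x \<in> T}"
      show "x \<in> (if u0 \<in> T then {0..<s} else {}) \<union> (+) s ` {x \<in> {0..}. u x \<in> T}"
      proof (cases "x < s")
        case True then show ?thesis using x by (auto simp: u'_def)
      next
        case False
        then have "x \<in> (+) s ` {x \<in> {0..}. u x \<in> T}"
          using x by (intro image_eqI[where x="x - s"]) (auto simp: u'_def)
        then show ?thesis by blast
      qed
    next
      fix x :: real assume "x \<in> (if u0 \<in> T then {0..<s} else {}) \<union> (+) s ` {x \<in> {0..}. u x \<in> T}"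
      then show "x \<in> {x \<in> {0..}. u' x \<in> T}" using s
        by (auto simp: u'_def split: if_splits)
    qed
    show ?thesis unfolding e
      by (intro sets.Un lebesgue_sets_translation m[rule_format] T) auto
  qed
  moreover have "\<forall>t\<ge>0. u' t \<in> U" using adm u0 unfolding admissible_control_def u'_def by auto
  ultimately have adm': "admissible_control U u'"
    unfolding admissible_control_def meas_pre by auto
  let ?G = "\<lambda>r. f (Y' r) (u' r)"
  let ?F = "\<lambda>\<rho>. f (\<phi> \<rho>) u0"
  let ?g = "\<lambda>r. f (Y r) (u r)"
  have spike1: "?G r = ?F r" if "r \<in> {0..t} - {s}" "t \<le> s" for r t
    using that by (auto simp: u'_def Y'_def)
  have tr': "is_trajectory f w u' Y'"
    unfolding is_trajectory_def
  proof (intro allI impI)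
    fix t :: real assume t: "0 \<le> t"
    show "?G integrable_on {0..t} \<and> Y' t = w + integral {0..t} ?G"
    proof (cases "t \<le> s")
      case True
      have iF: "?F integrable_on {0..t}"
        by (rule integrable_subinterval_real[OF phi_int]) (use True in auto)
      have "?G integrable_on {0..t}"
        by (rule integrable_spike_finite[of "{s}" _ _ ?F]) (use spike1 True iF in auto)
      moreover have "integral {0..t} ?G = integral {0..t} ?F"
        by (rule integral_spike[of "{s}"]) (use spike1 True in auto)
      ultimately show ?thesis using phi True t by (auto simp: Y'_def)
    next
      case False
      have ig: "?g integrable_on {0..t-s}" using traj_int[OF tr] False by auto
      have ig2: "(\<lambda>r. ?g (r + (-s))) integrable_on {s..t}"
        using integrable_shift_real_ivl[OF ig, where c="-s"] by simp
      have sp2: "?G r = ?g (r + (-s))" if "r \<in> {s..t} - {s}" for r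
        using that by (auto simp: u'_def Y'_def)
      have iG2: "?G integrable_on {s..t}"
        by (rule integrable_spike_finite[of "{s}" _ _ "\<lambda>r. ?g (r + (-s))"]) (use sp2 ig2 in auto)
      have iG1: "?G integrable_on {0..s}"
        by (rule integrable_spike_finite[of "{s}" _ _ ?F]) (use spike1 phi_int in auto)
      have iG: "?G integrable_on {0..t}"
        by (rule Henstock_Kurzweil_Integration.integrable_combine[OF _ _ iG1 iG2]) (use s False in auto)
      have I1: "integral {0..s} ?G = integral {0..s} ?F"
        by (rule integral_spike[of "{s}"]) (use spike1 in auto)
      have I2: "integral {s..t} ?G = integral {s..t} (\<lambda>r. ?g (r + (-s)))"
        by (rule integral_spike[of "{s}"]) (use sp2 in auto)
      have I3: "integral {s..t} (\<lambda>r. ?g (r + (-s))) = integral {0..t-s} ?g"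
        using integral_shift_real_ivl[where f="?g" and a=0 and c="-s" and b="t-s"] by simp
      have comb: "integral {0..s} ?G + integral {s..t} ?G = integral {0..t} ?G"
        by (rule Henstock_Kurzweil_Integration.integral_combine[OF _ _ iG]) (use s False in auto)
      have "Y' t = Y (t - s)" using False by (simp add: Y'_def)
      also have "\<dots> = \<phi> s + integral {0..t-s} ?g" using traj_eq[OF tr] False by auto
      also have "\<phi> s = w + integral {0..s} ?F" using phi s by auto
      finally have "Y' t = w + integral {0..t} ?G"
        using I1 I2 I3 comb by (simp add: algebra_simps)
      then show ?thesis using iG by blast
    qed
  qed
  have "Y' (s + \<theta>) = 0"
  proof (cases "\<theta> = 0")
    case True
    then show ?thesis using Y0 traj_0[OF tr] by (simp add: Y'_def)
  next
    case False then show ?thesis using Y0 th by (simp add: Y'_def)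
  qed
  then show ?thesis using min_time_le[OF adm' tr', of "s + \<theta>"] s th by simp
qed

lemma int_inner_le:
  fixes G :: "real \<Rightarrow> real ^ 'n"
  assumes G: "G integrable_on {0..a}" and a: "0 \<le> a" and b: "\<forall>r\<in>{0..a}. \<zeta> \<bullet> G r \<le> c"
  shows "\<zeta> \<bullet> integral {0..a} G \<le> a * c"
proof -
  have h: "((\<lambda>r. \<zeta> \<bullet> G r) has_integral \<zeta> \<bullet> integral {0..a} G) {0..a}"
    using has_integral_linear[OF integrable_integral[OF G] bounded_linear_inner_right[of \<zeta>]]
    by (simp add: o_def)
  have "integral {0..a} (\<lambda>r. \<zeta> \<bullet> G r) \<le> integral {0..a} (\<lambda>r. c)"
    by (rule integral_le) (use h b in auto)
  then show ?thesis using h a by (simp add: integral_unique)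
qed

lemma int_inner_ge:
  fixes G :: "real \<Rightarrow> real ^ 'n"
  assumes G: "G integrable_on {0..a}" and a: "0 \<le> a" and b: "\<forall>r\<in>{0..a}. c \<le> \<zeta> \<bullet> G r"
  shows "a * c \<le> \<zeta> \<bullet> integral {0..a} G"
proof -
  have h: "((\<lambda>r. \<zeta> \<bullet> G r) has_integral \<zeta> \<bullet> integral {0..a} G) {0..a}"
    using has_integral_linear[OF integrable_integral[OF G] bounded_linear_inner_right[of \<zeta>]]
    by (simp add: o_def)
  have "integral {0..a} (\<lambda>r. c) \<le> integral {0..a} (\<lambda>r. \<zeta> \<bullet> G r)"
    by (rule integral_le) (use h b in auto)
  then show ?thesis using h a by (simp add: integral_unique)
qed

lemma M_bound:
  fixes M a K L :: real
  assumes "0 \<le> M" "M \<le> a * (K + L * M)" "0 \<le> a" "0 \<le> L" "a * L \<le> 1/2"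
  shows "M \<le> 2 * a * K"
proof -
  have "a * L * M \<le> M / 2" using mult_right_mono[OF assms(5) assms(1)] by simp
  then show ?thesis using assms(2) by (simp add: algebra_simps)
qed

lemma traj_bound:
  fixes f :: "real ^ 'n \<Rightarrow> real ^ 'm \<Rightarrow> real ^ 'n"
  assumes tr: "is_trajectory f y0 u Y" and uU: "\<forall>t\<ge>0. u t \<in> U"
    and lip: "\<forall>z w u. u \<in> U \<longrightarrow> norm (f z u - f w u) \<le> L * norm (z - w)"
    and L: "0 \<le> L" and K: "\<forall>u\<in>U. norm (f y0 u) \<le> K"
    and a: "0 \<le> a" "a * L \<le> 1/2"
  shows "\<forall>r\<in>{0..a}. norm (Y r - y0) \<le> 2 * a * K"
proof -
  have K0: "0 \<le> K" using K uU by (meson norm_ge_zero order_trans order_refl)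
  have "continuous_on {0..a} (\<lambda>r. norm (Y r - y0))"
    by (intro continuous_intros traj_cont[OF tr a(1)])
  then obtain r0 where r0: "r0 \<in> {0..a}" and mx: "\<forall>r\<in>{0..a}. norm (Y r - y0) \<le> norm (Y r0 - y0)"
    using continuous_attains_sup[of "{0..a}" "\<lambda>r. norm (Y r - y0)"] a by auto
  define M where "M = norm (Y r0 - y0)"
  have bnd: "norm (Y r - y0) \<le> a * (K + L * M)" if r: "r \<in> {0..a}" for r
  proof -
    have "norm (Y r - y0) = norm (integral {0..r} (\<lambda>s. f (Y s) (u s)))"
      using traj_eq[OF tr, of r] r by auto
    also have "\<dots> \<le> integral {0..r} (\<lambda>s. K + L * M)"
    proof (rule integral_norm_bound_integral)
      show "(\<lambda>s. f (Y s) (u s)) integrable_on {0..r}" using traj_int[OF tr] r by auto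
      show "(\<lambda>s. K + L * M) integrable_on {0..r}" by (intro integrable_continuous_real continuous_intros)
      fix s assume s: "s \<in> {0..r}"
      have "norm (f (Y s) (u s)) \<le> norm (f y0 (u s)) + norm (f (Y s) (u s) - f y0 (u s))"
        by (metis add.commute diff_add_cancel norm_triangle_ineq)
      also have "\<dots> \<le> K + L * M"
      proof (rule add_mono)
        show "norm (f y0 (u s)) \<le> K" using K uU s by auto
        have "norm (f (Y s) (u s) - f y0 (u s)) \<le> L * norm (Y s - y0)" using lip uU s by auto
        also have "\<dots> \<le> L * M" using mx s r L unfolding M_def by (auto intro!: mult_left_mono)
        finally show "norm (f (Y s) (u s) - f y0 (u s)) \<le> L * M" .
      qed
      finally show "norm (f (Y s) (u s)) \<le> K + L * M" .
    qed
    also have "\<dots> = r * (K + L * M)" using r by simp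
    also have "\<dots> \<le> a * (K + L * M)" using r K0 L by (auto intro!: mult_right_mono simp: M_def)
    finally show ?thesis .
  qed
  have "M \<le> 2 * a * K"
    by (rule M_bound[OF _ bnd[OF r0, folded M_def] a(1) L a(2)]) (simp add: M_def)
  then show ?thesis using mx unfolding M_def by force
qed

lemma clamp_real: "0 \<le> (s::real) \<Longrightarrow> clamp 0 s r \<in> {0..s}"
  using clamp_in_interval[of 0 s r] by (simp add: cbox_interval)

lemma clamp_real_id: "r \<in> {0..(s::real)} \<Longrightarrow> clamp 0 s r = r"
  using clamp_cancel_cbox[of r 0 s] by (simp add: cbox_interval)

lemma ode_back:
  fixes F :: "real ^ 'n \<Rightarrow> real ^ 'n"
  assumes Fc: "continuous_on UNIV F" and lip: "\<forall>v w. norm (F v - F w) \<le> L * norm (v - w)"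
    and L: "0 \<le> L" and s: "0 \<le> s" "s * L \<le> 1/2"
  shows "\<exists>\<phi>. continuous_on {0..s} \<phi> \<and> (\<forall>r\<in>{0..s}. \<phi> r = z - integral {r..s} (\<lambda>\<rho>. F (\<phi> \<rho>)))
     \<and> (\<forall>r\<in>{0..s}. norm (\<phi> r - z) \<le> 2 * s * norm (F z))"
proof -
  define Q where "Q \<phi> r = z - integral {r..s} (\<lambda>\<rho>. F (apply_bcontfun \<phi> \<rho>))"
    for \<phi> :: "real \<Rightarrow>\<^sub>C (real ^ 'n)" and r
  have Gc: "continuous_on UNIV (\<lambda>\<rho>. F (apply_bcontfun \<phi> \<rho>))" for \<phi> :: "real \<Rightarrow>\<^sub>C (real ^ 'n)"
    by (rule continuous_on_compose2[OF Fc continuous_on_apply_bcontfun]) auto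
  have Gi: "(\<lambda>\<rho>. F (apply_bcontfun \<phi> \<rho>)) integrable_on {a..b}" for \<phi> :: "real \<Rightarrow>\<^sub>C (real ^ 'n)" and a b
    by (rule integrable_continuous_real) (rule continuous_on_subset[OF Gc[of \<phi>]], auto)
  have Qc: "continuous_on {0..s} (Q \<phi>)" for \<phi>
    unfolding Q_def by (intro continuous_intros indefinite_integral_continuous_1' Gi)
  have ex: "\<exists>g::real \<Rightarrow>\<^sub>C (real ^ 'n). \<forall>r. g r = Q \<phi> (clamp 0 s r)" for \<phi>
  proof -
    obtain g :: "real \<Rightarrow>\<^sub>C (real ^ 'n)" where "\<And>r. g r = Q \<phi> (clamp 0 s r)"
      using continuous_on_cbox_bcontfunE[of 0 s "Q \<phi>"] Qc[of \<phi>] by (auto simp: cbox_interval)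
    then show ?thesis by blast
  qed
  define P where "P \<phi> = (SOME g::real \<Rightarrow>\<^sub>C (real ^ 'n). \<forall>r. g r = Q \<phi> (clamp 0 s r))" for \<phi>
  have Peq: "P \<phi> r = Q \<phi> (clamp 0 s r)" for \<phi> r
    unfolding P_def using someI_ex[OF ex[of \<phi>]] by blast
  have intb: "norm (integral {r..s} (\<lambda>\<rho>. H \<rho>)) \<le> s * c"
    if "r \<in> {0..s}" "H integrable_on {r..s}" "\<forall>\<rho>\<in>{r..s}. norm (H \<rho>) \<le> c" for r c and H :: "real \<Rightarrow> real ^ 'n"
  proof -
    have c0: "0 \<le> c" using that(1,3) by (meson atLeastAtMost_iff norm_ge_zero order_refl order_trans)
    have "norm (integral {r..s} (\<lambda>\<rho>. H \<rho>)) \<le> integral {r..s} (\<lambda>\<rho>. c)"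
      by (rule integral_norm_bound_integral) (use that in \<open>auto intro: integrable_continuous_real continuous_intros\<close>)
    also have "\<dots> = (s - r) * c" using that(1) by simp
    also have "\<dots> \<le> s * c" using that(1) c0 by (auto intro: mult_right_mono)
    finally show ?thesis .
  qed
  have contr: "dist (P \<phi>1) (P \<phi>2) \<le> (1/2) * dist \<phi>1 \<phi>2" for \<phi>1 \<phi>2
  proof (rule dist_bound)
    fix r
    define r' where "r' = clamp 0 s r"
    have r': "r' \<in> {0..s}" unfolding r'_def using clamp_real[OF s(1)] .
    have "dist (P \<phi>1 r) (P \<phi>2 r) = norm (integral {r'..s} (\<lambda>\<rho>. F (\<phi>2 \<rho>) - F (\<phi>1 \<rho>)))"
      unfolding Peq Q_def r'_def[symmetric] dist_norm
      by (subst integral_diff) (auto intro: Gi simp: algebra_simps)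
    also have "\<dots> \<le> s * (L * dist \<phi>1 \<phi>2)"
    proof (rule intb[OF r'])
      show "(\<lambda>\<rho>. F (\<phi>2 \<rho>) - F (\<phi>1 \<rho>)) integrable_on {r'..s}" by (intro integrable_diff Gi)
      show "\<forall>\<rho>\<in>{r'..s}. norm (F (\<phi>2 \<rho>) - F (\<phi>1 \<rho>)) \<le> L * dist \<phi>1 \<phi>2"
      proof
        fix \<rho>
        have "norm (F (\<phi>2 \<rho>) - F (\<phi>1 \<rho>)) \<le> L * norm (\<phi>2 \<rho> - \<phi>1 \<rho>)" using lip by blast
        also have "\<dots> \<le> L * dist \<phi>1 \<phi>2"
          using dist_bounded[of \<phi>2 \<rho> \<phi>1] L by (auto intro!: mult_left_mono simp: dist_norm norm_minus_commute)
        finally show "norm (F (\<phi>2 \<rho>) - F (\<phi>1 \<rho>)) \<le> L * dist \<phi>1 \<phi>2" .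
      qed
    qed
    also have "\<dots> \<le> (1/2) * dist \<phi>1 \<phi>2"
      using mult_right_mono[OF s(2), of "dist \<phi>1 \<phi>2"] by (simp add: algebra_simps)
    finally show "dist (P \<phi>1 r) (P \<phi>2 r) \<le> (1/2) * dist \<phi>1 \<phi>2" .
  qed
  obtain \<phi> where fixp: "P \<phi> = \<phi>"
    using banach_fix_type[of "1/2" P] contr by auto
  have phiQ: "\<phi> r = Q \<phi> (clamp 0 s r)" for r using Peq[of \<phi> r] fixp by simp
  define D where "D = dist \<phi> (const_bcontfun z)"
  have "D \<le> s * (norm (F z) + L * D)"
    unfolding D_def
  proof (rule dist_bound)
    fix r
    define r' where "r' = clamp 0 s r"
    have r': "r' \<in> {0..s}" unfolding r'_def using clamp_real[OF s(1)] .
    have "dist (\<phi> r) (const_bcontfun z r) = norm (integral {r'..s} (\<lambda>\<rho>. F (\<phi> \<rho>)))"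
      by (subst phiQ) (simp add: Q_def r'_def[symmetric] dist_norm const_bcontfun.rep_eq)
    also have "\<dots> \<le> s * (norm (F z) + L * dist \<phi> (const_bcontfun z))"
    proof (rule intb[OF r'])
      show "(\<lambda>\<rho>. F (\<phi> \<rho>)) integrable_on {r'..s}" by (rule Gi)
      show "\<forall>\<rho>\<in>{r'..s}. norm (F (\<phi> \<rho>)) \<le> norm (F z) + L * dist \<phi> (const_bcontfun z)"
      proof
        fix \<rho>
        have "norm (F (\<phi> \<rho>)) \<le> norm (F z) + norm (F (\<phi> \<rho>) - F z)"
          by (metis add.commute diff_add_cancel norm_triangle_ineq)
        also have "norm (F (\<phi> \<rho>) - F z) \<le> L * norm (\<phi> \<rho> - z)" using lip by blast
        also have "\<dots> \<le> L * dist \<phi> (const_bcontfun z)"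
          using dist_bounded[of \<phi> \<rho> "const_bcontfun z"] L
          by (auto intro!: mult_left_mono simp: dist_norm const_bcontfun.rep_eq)
        finally show "norm (F (\<phi> \<rho>)) \<le> norm (F z) + L * dist \<phi> (const_bcontfun z)" by simp
      qed
    qed
    finally show "dist (\<phi> r) (const_bcontfun z r) \<le> s * (norm (F z) + L * dist \<phi> (const_bcontfun z))" .
  qed
  then have D2: "D \<le> 2 * s * norm (F z)"
    by (intro M_bound[OF _ _ s(1) L s(2)]) (auto simp: D_def)
  show ?thesis
  proof (intro exI conjI ballI)
    show "continuous_on {0..s} (apply_bcontfun \<phi>)" by simp
    fix r assume r: "r \<in> {0..s}"
    show "\<phi> r = z - integral {r..s} (\<lambda>\<rho>. F (\<phi> \<rho>))"
      using phiQ[of r] clamp_real_id[OF r] by (simp add: Q_def)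
  next
    fix r assume r: "r \<in> {0..s}"
    have "norm (\<phi> r - z) \<le> D"
      using dist_bounded[of \<phi> r "const_bcontfun z"] by (simp add: D_def dist_norm const_bcontfun.rep_eq)
    then show "norm (\<phi> r - z) \<le> 2 * s * norm (F z)" using D2 by simp
  qed
qed

lemma sq_sum_le: "(a + b)^2 \<le> 2 * a^2 + 2 * (b::real)^2"
proof -
  have "0 \<le> (a - b)^2" by simp
  then show ?thesis by (simp add: power2_eq_square algebra_simps)
qed

lemma prod_le_sq: "0 \<le> a \<Longrightarrow> 0 \<le> b \<Longrightarrow> a * b \<le> a^2 + (b::real)^2"
proof -
  assume "0 \<le> a" "0 \<le> b"
  have "0 \<le> (a - b)^2" by simp
  then have "2 * (a * b) \<le> a^2 + b^2" by (simp add: power2_eq_square algebra_simps)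
  moreover have "0 \<le> a * b" using \<open>0 \<le> a\<close> \<open>0 \<le> b\<close> by simp
  ultimately show ?thesis by linarith
qed

lemma arith1:
  fixes A \<sigma>0 Z L K e s W :: real
  assumes "0 \<le> \<sigma>0" "0 \<le> Z" "0 \<le> L" "0 \<le> K" "0 \<le> e" "0 \<le> s" "0 \<le> W"
    "A \<le> \<sigma>0 * W^2 + s * (Z * L * (2 * s * K + e))" "W \<le> e + 2 * s * K"
  shows "A \<le> (2*\<sigma>0 + 8*\<sigma>0*K^2 + 2*Z*L*K + Z*L) * (e^2 + s^2)"
proof -
  have "W^2 \<le> (e + 2* s *K)^2" using assms by (intro power_mono) auto
  also have "\<dots> \<le> 2*e^2 + 2*(2* s *K)^2" by (rule sq_sum_le)
  finally have w: "\<sigma>0 * W^2 \<le> \<sigma>0 * (2*e^2 + 2*(2* s *K)^2)" using assms(1) by (rule mult_left_mono)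
  have se: "s * e \<le> e^2 + s^2" using prod_le_sq[of s e] assms by linarith
  have zl: "Z * L * (s * e) \<le> Z * L * (e^2 + s^2)" using se assms by (intro mult_left_mono) auto
  have k1: "\<sigma>0 * K^2 * s^2 \<le> \<sigma>0*K^2 * (e^2+s^2)" using assms by (intro mult_left_mono) auto
  have k2: "Z*L*K * s^2 \<le> Z*L*K*(e^2+s^2)" using assms by (intro mult_left_mono) auto
  have k3: "\<sigma>0*e^2 \<le> \<sigma>0*(e^2+s^2)" using assms by (intro mult_left_mono) auto
  have eq1: "\<sigma>0 * (2*e^2 + 2*(2* s *K)^2) = 2*(\<sigma>0*e^2) + 8*(\<sigma>0 * K^2 * s^2)"
    by (simp add: power2_eq_square algebra_simps)
  have eq2: "s * (Z * L * (2 * s * K + e)) = 2*(Z*L*K * s^2) + Z * L * (s * e)"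
    by (simp add: power2_eq_square algebra_simps)
  have eq3: "(2*\<sigma>0 + 8*\<sigma>0*K^2 + 2*Z*L*K + Z*L) * (e^2 + s^2) =
     2*(\<sigma>0*(e^2+s^2)) + 8*(\<sigma>0*K^2 * (e^2+s^2)) + 2*(Z*L*K*(e^2+s^2)) + Z * L * (e^2 + s^2)"
    by (simp add: algebra_simps)
  show ?thesis unfolding eq3 using assms(8) w zl k1 k2 k3 eq1 eq2 by linarith
qed

lemma arith2:
  fixes A \<sigma>0 Z L K e s W Hh d :: real
  assumes "0 \<le> \<sigma>0" "0 \<le> Z" "0 \<le> L" "0 \<le> K" "0 \<le> e" "0 \<le> s" "0 \<le> W" "0 \<le> Hh"
    "s \<le> 2 * d"
    "A \<le> \<sigma>0 * W^2 + Hh * d^2 + s * (Z * L * (e + 2 * s * K))" "W \<le> e + 2 * s * K"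
  shows "A \<le> (2*\<sigma>0 + 32*\<sigma>0*K^2 + 2*Z*L + 8*Z*L*K + Hh) * (e^2 + d^2)"
proof -
  have d0: "0 \<le> d" using assms by linarith
  have "W^2 \<le> (e + 2* s *K)^2" using assms by (intro power_mono) auto
  also have "\<dots> \<le> 2*e^2 + 2*(2* s *K)^2" by (rule sq_sum_le)
  finally have w: "\<sigma>0 * W^2 \<le> \<sigma>0 * (2*e^2 + 2*(2* s *K)^2)" using assms(1) by (rule mult_left_mono)
  have ss: "s^2 \<le> (2*d)^2" using assms by (intro power_mono) auto
  have se: "s * e \<le> 2 * (e^2 + d^2)"
  proof -
    have "s * e \<le> (2*d) * e" using assms by (intro mult_right_mono) auto
    moreover have "d * e \<le> d^2 + e^2" using prod_le_sq[of d e] assms d0 by linarith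
    ultimately show ?thesis by (simp add: algebra_simps)
  qed
  have zl: "Z * L * (s * e) \<le> Z * L * (2 * (e^2 + d^2))" using se assms by (intro mult_left_mono) auto
  have k1: "\<sigma>0 * K^2 * s^2 \<le> \<sigma>0*K^2 * (4 * (e^2+d^2))"
  proof -
    have "(2*d)^2 = 4*d^2" by (simp add: power2_eq_square)
    moreover have "4 * (e^2+d^2) = 4*e^2 + 4*d^2" by simp
    ultimately have "s^2 \<le> 4 * (e^2+d^2)" using ss zero_le_power2[of e] by linarith
    then show ?thesis using assms by (intro mult_left_mono) auto
  qed
  have k2: "Z*L*K * s^2 \<le> Z*L*K*(4 * (e^2+d^2))"
  proof -
    have "(2*d)^2 = 4*d^2" by (simp add: power2_eq_square)
    moreover have "4 * (e^2+d^2) = 4*e^2 + 4*d^2" by simp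
    ultimately have "s^2 \<le> 4 * (e^2+d^2)" using ss zero_le_power2[of e] by linarith
    then show ?thesis using assms by (intro mult_left_mono) auto
  qed
  have k3: "\<sigma>0*e^2 \<le> \<sigma>0*(e^2+d^2)" using assms by (intro mult_left_mono) auto
  have k4: "Hh*d^2 \<le> Hh*(e^2+d^2)" using assms by (intro mult_left_mono) auto
  have eq1: "\<sigma>0 * (2*e^2 + 2*(2* s *K)^2) = 2*(\<sigma>0*e^2) + 8*(\<sigma>0 * K^2 * s^2)"
    by (simp add: power2_eq_square algebra_simps)
  have eq2: "s * (Z * L * (e + 2 * s * K)) = 2*(Z*L*K * s^2) + Z * L * (s * e)"
    by (simp add: power2_eq_square algebra_simps)
  have eq3: "(2*\<sigma>0 + 32*\<sigma>0*K^2 + 2*Z*L + 8*Z*L*K + Hh) * (e^2 + d^2) =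
     2*(\<sigma>0*(e^2+d^2)) + 8*(\<sigma>0*K^2 * (4*(e^2+d^2))) + Z * L * (2*(e^2 + d^2)) + 2*(Z*L*K*(4*(e^2+d^2))) + Hh*(e^2+d^2)"
    by (simp add: algebra_simps)
  show ?thesis unfolding eq3 using assms(10) w zl k1 k2 k3 k4 eq1 eq2 by linarith
qed

lemma arith_far:
  fixes A \<delta> Z Hh e d :: real
  assumes "0 < \<delta>" "0 \<le> Z" "0 \<le> Hh" "0 \<le> e" "\<not> (e \<le> \<delta> \<and> \<bar>d\<bar> \<le> \<delta>)" "A \<le> Z * e + Hh * \<bar>d\<bar>"
  shows "A \<le> ((Z + Hh) / \<delta>) * (e^2 + d^2)"
proof -
  have n: "\<delta>^2 \<le> e^2 + d^2 \<or> (e \<le> \<delta> \<and> \<bar>d\<bar> \<le> \<delta>)"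
  proof (cases "e \<le> \<delta>")
    case True
    show ?thesis
    proof (cases "\<bar>d\<bar> \<le> \<delta>")
      case False
      then have "\<delta>^2 \<le> \<bar>d\<bar>^2" using assms by (intro power_mono) auto
      then show ?thesis by (intro disjI1 add_increasing) auto
    qed (use True in auto)
  next
    case False
    then have "\<delta>^2 \<le> e^2" using assms by (intro power_mono) auto
    then show ?thesis by (simp add: add_increasing2)
  qed
  with assms have n2: "\<delta>^2 \<le> e^2 + d^2" by auto
  have ed: "e * \<delta> \<le> e^2 + d^2"
  proof (cases "e \<le> \<delta>")
    case True
    then have "e * \<delta> \<le> \<delta> * \<delta>" using assms by (intro mult_right_mono) auto
    then show ?thesis using n2 by (simp add: power2_eq_square)
  next
    case False
    then have "e * \<delta> \<le> e * e" using assms by (intro mult_left_mono) auto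
    then show ?thesis by (simp add: power2_eq_square add_increasing2)
  qed
  have dd: "\<bar>d\<bar> * \<delta> \<le> e^2 + d^2"
  proof (cases "\<bar>d\<bar> \<le> \<delta>")
    case True
    then have "\<bar>d\<bar> * \<delta> \<le> \<delta> * \<delta>" using assms by (intro mult_right_mono) auto
    then show ?thesis using n2 by (simp add: power2_eq_square)
  next
    case False
    then have "\<bar>d\<bar> * \<delta> \<le> \<bar>d\<bar> * \<bar>d\<bar>" using assms by (intro mult_left_mono) auto
    then show ?thesis by (simp add: power2_eq_square add_increasing)
  qed
  have "A * \<delta> \<le> (Z * e + Hh * \<bar>d\<bar>) * \<delta>" using assms by (intro mult_right_mono) auto
  also have "\<dots> = Z * (e * \<delta>) + Hh * (\<bar>d\<bar> * \<delta>)" by (simp add: algebra_simps)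
  also have "\<dots> \<le> Z * (e^2 + d^2) + Hh * (e^2 + d^2)"
    using ed dd assms by (intro add_mono mult_left_mono) auto
  finally have "A * \<delta> \<le> (Z + Hh) * (e^2 + d^2)" by (simp add: algebra_simps)
  then have "A \<le> ((Z + Hh) * (e^2 + d^2)) / \<delta>" using assms(1) by (simp add: pos_le_divide_eq)
  then show ?thesis by (simp add: times_divide_eq_left)
qed

lemma back_step:
  fixes f :: "real ^ 'n \<Rightarrow> real ^ 'm \<Rightarrow> real ^ 'n"
  assumes Fc: "continuous_on UNIV (\<lambda>v. f v u0)" and u0: "u0 \<in> U"
    and lip: "\<forall>z w u. u \<in> U \<longrightarrow> norm (f z u - f w u) \<le> L * norm (z - w)"
    and L: "0 \<le> L" and s: "0 \<le> s" "s * L \<le> 1/2"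
    and Tz: "min_time f U z \<le> ereal \<beta>"
  shows "\<exists>\<phi>. (\<forall>r\<in>{0..s}. norm (\<phi> r - z) \<le> 2 * s * norm (f z u0))
     \<and> (\<lambda>\<rho>. f (\<phi> \<rho>) u0) integrable_on {0..s}
     \<and> z = \<phi> 0 + integral {0..s} (\<lambda>\<rho>. f (\<phi> \<rho>) u0)
     \<and> min_time f U (\<phi> 0) \<le> ereal (s + \<beta>)"
proof -
  have lipF: "\<forall>v w. norm (f v u0 - f w u0) \<le> L * norm (v - w)" using lip u0 by blast
  obtain \<phi> where pc: "continuous_on {0..s} \<phi>"
    and pe: "\<forall>r\<in>{0..s}. \<phi> r = z - integral {r..s} (\<lambda>\<rho>. f (\<phi> \<rho>) u0)"
    and pb: "\<forall>r\<in>{0..s}. norm (\<phi> r - z) \<le> 2 * s * norm (f z u0)"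
    using ode_back[OF Fc lipF L s, of z] by blast
  have ic: "continuous_on {0..s} (\<lambda>\<rho>. f (\<phi> \<rho>) u0)"
    by (rule continuous_on_compose2[OF Fc pc]) auto
  have ii: "(\<lambda>\<rho>. f (\<phi> \<rho>) u0) integrable_on {0..s}"
    by (rule integrable_continuous_real[OF ic])
  have comb: "integral {0..r} (\<lambda>\<rho>. f (\<phi> \<rho>) u0) + integral {r..s} (\<lambda>\<rho>. f (\<phi> \<rho>) u0)
      = integral {0..s} (\<lambda>\<rho>. f (\<phi> \<rho>) u0)" if "r \<in> {0..s}" for r
    by (rule Henstock_Kurzweil_Integration.integral_combine[OF _ _ ii]) (use that in auto)
  have p0: "\<phi> 0 = z - integral {0..s} (\<lambda>\<rho>. f (\<phi> \<rho>) u0)" using pe s by auto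
  have fw: "\<forall>r\<in>{0..s}. \<phi> r = \<phi> 0 + integral {0..r} (\<lambda>\<rho>. f (\<phi> \<rho>) u0)"
  proof
    fix r assume r: "r \<in> {0..s}"
    have "\<phi> r = z - integral {r..s} (\<lambda>\<rho>. f (\<phi> \<rho>) u0)" using pe r by blast
    also have "\<dots> = (z - integral {0..s} (\<lambda>\<rho>. f (\<phi> \<rho>) u0)) + integral {0..r} (\<lambda>\<rho>. f (\<phi> \<rho>) u0)"
      by (simp add: comb[OF r, symmetric] algebra_simps)
    also have "\<dots> = \<phi> 0 + integral {0..r} (\<lambda>\<rho>. f (\<phi> \<rho>) u0)" using p0 by simp
    finally show "\<phi> r = \<phi> 0 + integral {0..r} (\<lambda>\<rho>. f (\<phi> \<rho>) u0)" .
  qed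
  have ps: "\<phi> s = z" using pe s by simp
  have T: "min_time f U (\<phi> 0) \<le> ereal (s + \<beta>)"
  proof (rule ereal_le_epsilon2)
    fix e :: real assume e: "0 < e"
    have "ereal \<beta> < ereal (\<beta> + e)" using e by simp
    then have "min_time f U z < ereal (\<beta> + e)" using Tz by (rule order_le_less_trans[rotated])
    then obtain \<theta> u Y where th: "0 \<le> \<theta>" "\<theta> < \<beta> + e" and adm: "admissible_control U u"
      and tr: "is_trajectory f z u Y" and Y0: "Y \<theta> = 0"
      using min_time_lt by blast
    have "min_time f U (\<phi> 0) \<le> ereal (s + \<theta>)"
      using prepend[where \<phi>=\<phi> and w="\<phi> 0" and f=f and s=s and Y=Y and \<theta>=\<theta> and u=u and U=U, OF u0 s(1) fw ii adm _ Y0 th(1)] tr ps by simp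
    also have "\<dots> \<le> ereal (s + \<beta>) + ereal e" using th by simp
    finally show "min_time f U (\<phi> 0) \<le> ereal (s + \<beta>) + ereal e" .
  qed
  have zz: "z = \<phi> 0 + integral {0..s} (\<lambda>\<rho>. f (\<phi> \<rho>) u0)" using p0 by simp
  show ?thesis
    using pb ii T zz by blast
qed

theorem proposition3p1:
  fixes f :: "real ^ 'n \<Rightarrow> real ^ 'm \<Rightarrow> real ^ 'n"
    and U :: "(real ^ 'm) set"
    and Dxf :: "real ^ 'n \<Rightarrow> real ^ 'm \<Rightarrow> ((real ^ 'n) \<Rightarrow>\<^sub>L (real ^ 'n))"
    and L L1 :: real
    and x \<zeta> :: "real ^ 'n"
  assumes U_ne: "U \<noteq> {}" and U_compact: "compact U"
    and convex_vel: "\<forall>z. convex (f z ` U)"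
    and f_cont: "continuous_on (UNIV \<times> U) (\<lambda>(z, u). f z u)"
    and L_pos: "L > 0"
    and f_lip: "\<forall>z w u. u \<in> U \<longrightarrow> norm (f z u - f w u) \<le> L * norm (z - w)"
    and Dxf_deriv: "\<forall>z u. u \<in> U \<longrightarrow> ((\<lambda>w. f w u) has_derivative blinfun_apply (Dxf z u)) (at z)"
    and Dxf_cont: "continuous_on (UNIV \<times> U) (\<lambda>(z, u). Dxf z u)"
    and L1_pos: "L1 > 0"
    and Dxf_lip: "\<forall>z w u. u \<in> U \<longrightarrow> norm (Dxf z u - Dxf w u) \<le> L1 * norm (z - w)"
    and x_ne: "x \<noteq> 0"
    and nbhd: "\<exists>V. open V \<and> x \<in> V \<and>
       (\<forall>y\<in>V. min_time f U y \<noteq> \<infinity>) \<and>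
       continuous_on V (\<lambda>y. real_of_ereal (min_time f U y)) \<and>
       (\<forall>y\<in>V. optimal_point f U y) \<and>
       (\<forall>y\<in>V. \<exists>u. optimal_control f U y u \<and>
            bang_bang_on U (real_of_ereal (min_time f U y)) u \<and>
            (\<forall>v. optimal_control f U y v \<longrightarrow>
               (AE t in lborel. t \<in> {0..real_of_ereal (min_time f U y)} \<longrightarrow> v t = u t)))"
    and reach: "\<exists>r. ereal r > min_time f U x \<and>
       (\<forall>t. t < r \<longrightarrow> locally_positive_reach (reach_set f U (ereal t)))"
    and zeta: "\<zeta> \<in> proximal_normal (reach_set f U (min_time f U x)) x"
  shows "min_hamiltonian f U x \<zeta> \<le> 0 \<and>
    (\<zeta>, min_hamiltonian f U x \<zeta>) \<in>
      proximal_normal (epigraph (min_time f U)) (x, real_of_ereal (min_time f U x))"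
proof -
  have Tfin: "min_time f U x \<noteq> \<infinity>" using nbhd by blast
  obtain \<tau> where Tx: "min_time f U x = ereal \<tau>" and \<tau>0: "0 \<le> \<tau>"
    using Tfin min_time_nonneg[of f U x] by (cases "min_time f U x") auto
  have Txr: "real_of_ereal (min_time f U x) = \<tau>" using Tx by simp
  have fcu: "continuous_on U (f z)" for z
  proof -
    have "continuous_on U (\<lambda>u. (\<lambda>(z, u). f z u) (z, u))"
      by (rule continuous_on_compose2[OF f_cont]) (auto intro: continuous_intros)
    then show ?thesis by simp
  qed
  have fcv: "continuous_on UNIV (\<lambda>v. f v u)" if "u \<in> U" for u
  proof -
    have "continuous_on UNIV (\<lambda>v. (\<lambda>(z, u). f z u) (v, u))"
      by (rule continuous_on_compose2[OF f_cont]) (use that in \<open>auto intro: continuous_intros\<close>)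
    then show ?thesis by simp
  qed
  have L0: "0 \<le> L" using L_pos by simp
  have hc: "continuous_on U (\<lambda>u. \<zeta> \<bullet> f x u)"
    by (intro continuous_intros fcu)
  obtain ust where ust: "ust \<in> U" "\<forall>u\<in>U. \<zeta> \<bullet> f x ust \<le> \<zeta> \<bullet> f x u"
    using continuous_attains_inf[OF U_compact U_ne hc] by blast
  define hh where "hh = \<zeta> \<bullet> f x ust"
  have hdef: "min_hamiltonian f U x \<zeta> = hh"
    unfolding min_hamiltonian_def hh_def by (rule cInf_eq_minimum) (use ust in auto)
  have hmin: "u \<in> U \<Longrightarrow> hh \<le> \<zeta> \<bullet> f x u" for u using ust hh_def by auto
  have "bounded (f 0 ` U)" by (intro compact_imp_bounded compact_continuous_image fcu U_compact)
  then obtain C0 where C0: "\<forall>u\<in>U. norm (f 0 u) \<le> C0" unfolding bounded_iff by blast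
  have C0nn: "0 \<le> C0" using C0 U_ne by (meson all_not_in_conv norm_ge_zero order_trans)
  have fbound: "norm (f z u) \<le> C0 + L * norm z" if "u \<in> U" for z u
  proof -
    have "norm (f z u) \<le> norm (f 0 u) + norm (f z u - f 0 u)"
      by (metis add.commute diff_add_cancel norm_triangle_ineq)
    also have "\<dots> \<le> C0 + L * norm (z - 0)"
    proof (rule add_mono)
      show "norm (f 0 u) \<le> C0" using C0 that by blast
      show "norm (f z u - f 0 u) \<le> L * norm (z - 0)" using f_lip that by blast
    qed
    finally show ?thesis by simp
  qed
  define K where "K = C0 + L * (norm x + 1)"
  have Kb: "norm (f z u) \<le> K" if "norm (z - x) \<le> 1" "u \<in> U" for z u
  proof -
    have "norm z \<le> norm x + 1" using that(1) norm_triangle_ineq2[of z x] by linarith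
    then have "L * norm z \<le> L * (norm x + 1)" using L0 by (rule mult_left_mono)
    then show ?thesis using fbound[OF that(2), of z] unfolding K_def by linarith
  qed
  have K0: "0 \<le> K" unfolding K_def using C0nn L0 by simp
  have Kx: "\<forall>u\<in>U. norm (f x u) \<le> K" using Kb[of x] by simp
  obtain \<sigma>0 where \<sigma>0: "0 \<le> \<sigma>0"
    and \<sigma>0b: "\<And>y. min_time f U y \<le> ereal \<tau> \<Longrightarrow> \<zeta> \<bullet> (y - x) \<le> \<sigma>0 * (norm (y - x))\<^sup>2"
    using zeta unfolding proximal_normal_def reach_set_def Tx by auto
  define \<delta> where "\<delta> = min 1 (1 / (4 * L))"
  have \<delta>0: "0 < \<delta>" and \<delta>1: "\<delta> \<le> 1" and \<delta>L: "\<delta> * L \<le> 1/4"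
  proof -
    show "0 < \<delta>" "\<delta> \<le> 1" unfolding \<delta>_def using L_pos by auto
    have "\<delta> * L \<le> (1 / (4 * L)) * L" unfolding \<delta>_def using L0 by (intro mult_right_mono) auto
    then show "\<delta> * L \<le> 1/4" using L_pos by simp
  qed
  define Z where "Z = norm \<zeta>"
  have Z0: "0 \<le> Z" unfolding Z_def by simp
  have ilip: "\<zeta> \<bullet> f a u \<ge> \<zeta> \<bullet> f b u - Z * (L * norm (a - b))"
     "\<zeta> \<bullet> f a u \<le> \<zeta> \<bullet> f b u + Z * (L * norm (a - b))" if "u \<in> U" for a b u
  proof -
    have "\<bar>\<zeta> \<bullet> (f a u - f b u)\<bar> \<le> Z * norm (f a u - f b u)"
      unfolding Z_def by (rule Cauchy_Schwarz_ineq2)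
    also have "\<dots> \<le> Z * (L * norm (a - b))" using f_lip that Z0 by (intro mult_left_mono) auto
    finally have "\<bar>\<zeta> \<bullet> f a u - \<zeta> \<bullet> f b u\<bar> \<le> Z * (L * norm (a - b))" by (simp add: inner_diff_right)
    then show "\<zeta> \<bullet> f a u \<ge> \<zeta> \<bullet> f b u - Z * (L * norm (a - b))"
       "\<zeta> \<bullet> f a u \<le> \<zeta> \<bullet> f b u + Z * (L * norm (a - b))" by linarith+
  qed
  have uUof: "\<forall>t\<ge>0. u t \<in> U" if "admissible_control U u" for u
    using that unfolding admissible_control_def by blast
  have hle: "hh \<le> 0"
  proof (rule ccontr)
    assume "\<not> hh \<le> 0"
    then have hpos: "0 < hh" by simp
    define B where "B = 4 * \<sigma>0 * K^2 + 2 * Z * L * K + 1"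
    have B0: "0 < B" unfolding B_def using \<sigma>0 K0 Z0 L0 by (simp add: add_nonneg_pos)
    define s where "s = min \<delta> (hh / (2 * B))"
    have s0: "0 < s" unfolding s_def using \<delta>0 hpos B0 by simp
    have s\<delta>: "s \<le> \<delta>" unfolding s_def by simp
    have sB: "s * B \<le> hh / 2"
    proof -
      have "s * B \<le> (hh / (2 * B)) * B" unfolding s_def using B0 by (intro mult_right_mono) auto
      then show ?thesis using B0 by simp
    qed
    have "ereal \<tau> < ereal (\<tau> + s)" using s0 by simp
    then have "min_time f U x < ereal (\<tau> + s)" using Tx by simp
    then obtain \<theta> u Y where th: "0 \<le> \<theta>" "\<theta> < \<tau> + s" and adm: "admissible_control U u"
      and tr: "is_trajectory f x u Y" and Y0: "Y \<theta> = 0"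
      using min_time_lt by blast
    have "\<theta> \<noteq> 0" using traj_0[OF tr] Y0 x_ne by auto
    define a where "a = min s \<theta>"
    have a0: "0 < a" and as: "a \<le> s" and ath: "a \<le> \<theta>" and at: "\<theta> - a \<le> \<tau>"
      unfolding a_def using s0 th \<open>\<theta> \<noteq> 0\<close> \<tau>0 by auto
    have aL: "a * L \<le> 1/2"
    proof -
      have "a * L \<le> \<delta> * L" using as s\<delta> L0 by (intro mult_right_mono) auto
      then show ?thesis using \<delta>L by simp
    qed
    have bnd: "\<forall>r\<in>{0..a}. norm (Y r - x) \<le> 2 * a * K"
      by (rule traj_bound[OF tr uUof[OF adm] f_lip L0 Kx _ aL]) (use a0 in simp)
    have "min_time f U (Y a) \<le> ereal (\<theta> - a)"
      by (rule min_time_shift[OF adm tr Y0]) (use a0 ath in auto)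
    also have "\<dots> \<le> ereal \<tau>" using at by simp
    finally have up: "\<zeta> \<bullet> (Y a - x) \<le> \<sigma>0 * (norm (Y a - x))\<^sup>2" by (rule \<sigma>0b)
    have "(norm (Y a - x))\<^sup>2 \<le> (2 * a * K)\<^sup>2" using bnd a0 by (intro power_mono) auto
    then have up2: "\<zeta> \<bullet> (Y a - x) \<le> \<sigma>0 * (2 * a * K)\<^sup>2" using up \<sigma>0
      by (meson mult_left_mono order_trans)
    have eqY: "Y a - x = integral {0..a} (\<lambda>s. f (Y s) (u s))"
      using traj_eq[OF tr, of a] a0 by simp
    have lo: "a * (hh - Z * (L * (2 * a * K))) \<le> \<zeta> \<bullet> integral {0..a} (\<lambda>s. f (Y s) (u s))"
    proof (rule int_inner_ge)
      show "(\<lambda>s. f (Y s) (u s)) integrable_on {0..a}" using traj_int[OF tr] a0 by simp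
      show "0 \<le> a" using a0 by simp
      show "\<forall>r\<in>{0..a}. hh - Z * (L * (2 * a * K)) \<le> \<zeta> \<bullet> f (Y r) (u r)"
      proof
        fix r assume r: "r \<in> {0..a}"
        have uU: "u r \<in> U" using uUof[OF adm] r by auto
        have "Z * (L * norm (Y r - x)) \<le> Z * (L * (2 * a * K))"
          using bnd r Z0 L0 by (intro mult_left_mono) auto
        then show "hh - Z * (L * (2 * a * K)) \<le> \<zeta> \<bullet> f (Y r) (u r)"
          using ilip(1)[OF uU, where a="Y r" and b=x] hmin[OF uU] by linarith
      qed
    qed
    have key: "a * hh \<le> a * (a * (4 * \<sigma>0 * K^2 + 2 * Z * L * K))"
    proof -
      have e1: "a * (hh - Z * (L * (2 * a * K))) = a * hh - a * (a * (2 * Z * L * K))"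
        by (simp add: algebra_simps)
      have e2: "\<sigma>0 * (2 * a * K)\<^sup>2 = a * (a * (4 * \<sigma>0 * K^2))"
        by (simp add: power2_eq_square algebra_simps)
      have e3: "a * (a * (4 * \<sigma>0 * K^2 + 2 * Z * L * K)) = a * (a * (4 * \<sigma>0 * K^2)) + a * (a * (2 * Z * L * K))"
        by (simp add: algebra_simps)
      have e4: "\<zeta> \<bullet> (Y a - x) = \<zeta> \<bullet> integral {0..a} (\<lambda>s. f (Y s) (u s))" using eqY by simp
      show ?thesis using lo up2 e4 e1 e2 e3 by linarith
    qed
    then have "hh \<le> a * (4 * \<sigma>0 * K^2 + 2 * Z * L * K)" using a0 by simp
    also have "\<dots> < a * B" unfolding B_def using a0 by simp
    also have "\<dots> \<le> s * B" using as B0 by (intro mult_right_mono) auto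
    finally show False using sB hpos by linarith
  qed
  define Hh where "Hh = - hh"
  have Hh0: "0 \<le> Hh" unfolding Hh_def using hle by simp
  define \<sigma> where "\<sigma> = (Z + Hh) / \<delta> + (2*\<sigma>0 + 32*\<sigma>0*K^2 + 2*Z*L + 8*Z*L*K + Hh)"
  have core: "\<zeta> \<bullet> (y - x) + hh * (\<beta> - \<tau>) \<le> \<sigma> * ((norm (y - x))\<^sup>2 + (\<beta> - \<tau>)\<^sup>2)"
    if yb: "min_time f U y \<le> ereal \<beta>" for y \<beta>
  proof -
    define e where "e = norm (y - x)"
    define d where "d = \<beta> - \<tau>"
    define A where "A = \<zeta> \<bullet> (y - x) + hh * d"
    have e0: "0 \<le> e" unfolding e_def by simp
    have n0: "0 \<le> e^2 + d^2" by simp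
    have fa: "0 \<le> (Z + Hh) / \<delta>" using Z0 Hh0 \<delta>0 by simp
    define \<sigma>n where "\<sigma>n = 2*\<sigma>0 + 32*\<sigma>0*K^2 + 2*Z*L + 8*Z*L*K + Hh"
    have \<sigma>n0: "0 \<le> \<sigma>n" unfolding \<sigma>n_def using \<sigma>0 Z0 L0 K0 Hh0 by simp
    have \<sigma>eq: "\<sigma> = (Z + Hh) / \<delta> + \<sigma>n" unfolding \<sigma>_def \<sigma>n_def by simp
    have goal: "A \<le> \<sigma> * (e^2 + d^2)"
    proof (cases "e \<le> \<delta> \<and> \<bar>d\<bar> \<le> \<delta>")
      case False
      have "\<zeta> \<bullet> (y - x) \<le> Z * e" unfolding Z_def e_def by (rule norm_cauchy_schwarz)
      moreover have "hh * d \<le> Hh * \<bar>d\<bar>"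
      proof -
        have "hh * d \<le> \<bar>hh * d\<bar>" by (rule abs_ge_self)
        also have "\<dots> = Hh * \<bar>d\<bar>" unfolding Hh_def using hle by (simp add: abs_mult)
        finally show ?thesis .
      qed
      ultimately have "A \<le> Z * e + Hh * \<bar>d\<bar>" unfolding A_def by linarith
      then have "A \<le> ((Z + Hh) / \<delta>) * (e^2 + d^2)"
        by (rule arith_far[OF \<delta>0 Z0 Hh0 e0 False])
      also have "\<dots> \<le> \<sigma> * (e^2 + d^2)" unfolding \<sigma>eq using \<sigma>n0 n0 by (intro mult_right_mono) auto
      finally show ?thesis .
    next
      case True
      then have e\<delta>: "e \<le> \<delta>" and d\<delta>: "\<bar>d\<bar> \<le> \<delta>" by auto
      have e1: "norm (y - x) \<le> 1" using e\<delta> \<delta>1 unfolding e_def by simp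
      have near: "A \<le> \<sigma>n * (e^2 + d^2)"
      proof (cases "d \<le> 0")
        case True
        define s where "s = - d"
        have s0: "0 \<le> s" and s\<delta>: "s \<le> \<delta>" unfolding s_def using True d\<delta> by auto
        have sL: "s * L \<le> 1/2"
        proof -
          have "s * L \<le> \<delta> * L" using s\<delta> L0 by (intro mult_right_mono) auto
          then show ?thesis using \<delta>L by simp
        qed
        obtain \<phi> where pb: "\<forall>r\<in>{0..s}. norm (\<phi> r - y) \<le> 2 * s * norm (f y ust)"
          and ii: "(\<lambda>\<rho>. f (\<phi> \<rho>) ust) integrable_on {0..s}"
          and yeq: "y = \<phi> 0 + integral {0..s} (\<lambda>\<rho>. f (\<phi> \<rho>) ust)"
          and Tw: "min_time f U (\<phi> 0) \<le> ereal (s + \<beta>)"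
          using back_step[OF fcv[OF ust(1)] ust(1) f_lip L0 s0 sL yb] by blast
        have sb: "s + \<beta> = \<tau>" unfolding s_def d_def by simp
        have pb2: "norm (\<phi> r - y) \<le> 2 * s * K" if "r \<in> {0..s}" for r
        proof -
          have "2 * s * norm (f y ust) \<le> 2 * s * K" using Kb[OF e1 ust(1)] s0 by (intro mult_left_mono) auto
          then show ?thesis using pb that by fastforce
        qed
        define w where "w = \<phi> 0"
        define W where "W = norm (w - x)"
        have W: "W \<le> e + 2 * s * K"
        proof -
          have "W \<le> norm (w - y) + norm (y - x)" unfolding W_def using norm_triangle_ineq[of "w - y" "y - x"] by simp
          then show ?thesis using pb2[of 0] s0 unfolding w_def e_def by auto
        qed
        have up: "\<zeta> \<bullet> (w - x) \<le> \<sigma>0 * W^2" unfolding W_def using Tw sb w_def by (intro \<sigma>0b) simp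
        have ip: "\<zeta> \<bullet> integral {0..s} (\<lambda>\<rho>. f (\<phi> \<rho>) ust) \<le> s * (hh + Z * (L * (2 * s * K + e)))"
        proof (rule int_inner_le[OF ii s0], rule ballI)
          fix r assume r: "r \<in> {0..s}"
          have "norm (\<phi> r - x) \<le> norm (\<phi> r - y) + norm (y - x)" using norm_triangle_ineq[of "\<phi> r - y" "y - x"] by simp
          then have "norm (\<phi> r - x) \<le> 2 * s * K + e" using pb2[OF r] unfolding e_def by linarith
          then have "Z * (L * norm (\<phi> r - x)) \<le> Z * (L * (2 * s * K + e))"
            using Z0 L0 by (intro mult_left_mono) auto
          then show "\<zeta> \<bullet> f (\<phi> r) ust \<le> hh + Z * (L * (2 * s * K + e))"
            using ilip(2)[OF ust(1), where a="\<phi> r" and b=x] unfolding hh_def by linarith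
        qed
        have "A = \<zeta> \<bullet> (w - x) + \<zeta> \<bullet> integral {0..s} (\<lambda>\<rho>. f (\<phi> \<rho>) ust) - hh * s"
        proof -
          have dms: "d = - s" unfolding s_def by simp
          show ?thesis unfolding A_def w_def dms by (subst yeq) (simp add: inner_simps algebra_simps)
        qed
        then have "A \<le> \<sigma>0 * W^2 + s * (Z * L * (2 * s * K + e))"
          using up ip by (simp add: algebra_simps)
        then have "A \<le> (2*\<sigma>0 + 8*\<sigma>0*K^2 + 2*Z*L*K + Z*L) * (e^2 + s^2)"
          using arith1[OF \<sigma>0 Z0 L0 K0 e0 s0 _ _ W] by (simp add: W_def)
        also have "e^2 + s^2 = e^2 + d^2" unfolding s_def by simp
        also have "(2*\<sigma>0 + 8*\<sigma>0*K^2 + 2*Z*L*K + Z*L) * (e^2 + d^2) \<le> \<sigma>n * (e^2 + d^2)"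
        proof (rule mult_right_mono[OF _ n0])
          have "8*\<sigma>0*K^2 \<le> 32*\<sigma>0*K^2" using \<sigma>0 by simp
          moreover have "2*Z*L*K \<le> 8*Z*L*K" using Z0 L0 K0 by simp
          moreover have "Z*L \<le> 2*Z*L" using Z0 L0 by simp
          ultimately show "2*\<sigma>0 + 8*\<sigma>0*K^2 + 2*Z*L*K + Z*L \<le> \<sigma>n" unfolding \<sigma>n_def using Hh0 by linarith
        qed
        finally show ?thesis .
      next
        case False
        then have d0: "0 < d" by simp
        show ?thesis
        proof (cases "min_time f U y \<le> ereal \<tau>")
          case True
          have "\<zeta> \<bullet> (y - x) \<le> \<sigma>0 * e^2" using \<sigma>0b[OF True] unfolding e_def .
          moreover have "hh * d \<le> 0" using hle d0 by (simp add: mult_nonpos_nonneg)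
          moreover have "\<sigma>0 * e^2 \<le> \<sigma>n * (e^2 + d^2)"
          proof -
            have "\<sigma>0 * e^2 \<le> \<sigma>0 * (e^2 + d^2)" using \<sigma>0 by (intro mult_left_mono) auto
            also have "\<dots> \<le> \<sigma>n * (e^2 + d^2)" unfolding \<sigma>n_def
              using \<sigma>0 Z0 L0 K0 Hh0 n0 by (intro mult_right_mono) auto
            finally show ?thesis .
          qed
          ultimately show ?thesis unfolding A_def by linarith
        next
          case False
          then have Tyg: "ereal \<tau> < min_time f U y" by simp
          have "ereal \<beta> < ereal (\<beta> + d^2)" using d0 by simp
          then have "min_time f U y < ereal (\<beta> + d^2)" using yb by (rule order_le_less_trans[rotated])
          then obtain \<theta> u Y where th: "0 \<le> \<theta>" "\<theta> < \<beta> + d^2" and adm: "admissible_control U u"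
            and tr: "is_trajectory f y u Y" and Y0: "Y \<theta> = 0"
            using min_time_lt by blast
          have "min_time f U y \<le> ereal \<theta>" by (rule min_time_le[OF adm tr th(1) Y0])
          then have th\<tau>: "\<tau> < \<theta>" using Tyg by (metis ereal_less_eq(3) leD leI order_trans)
          define s where "s = \<theta> - \<tau>"
          have s0: "0 < s" unfolding s_def using th\<tau> by simp
          have d1: "d \<le> 1" using d\<delta> \<delta>1 by simp
          have "d^2 \<le> d" using d0 d1 by (simp add: power2_eq_square mult_left_le)
          then have s2d: "s \<le> 2 * d" using th d_def s_def by linarith
          have sL: "s * L \<le> 1/2"
          proof -
            have "s * L \<le> (2 * \<delta>) * L" using s2d d\<delta> L0 by (intro mult_right_mono) auto
            then show ?thesis using \<delta>L by simp
          qed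
          have Ky: "\<forall>u\<in>U. norm (f y u) \<le> K" using Kb[OF e1] by blast
          have bnd: "\<forall>r\<in>{0..s}. norm (Y r - y) \<le> 2 * s * K"
            by (rule traj_bound[OF tr uUof[OF adm] f_lip L0 Ky _ sL]) (use s0 in simp)
          define w where "w = Y s"
          define W where "W = norm (w - x)"
          have W: "W \<le> e + 2 * s * K"
          proof -
            have "W \<le> norm (w - y) + norm (y - x)" unfolding W_def using norm_triangle_ineq[of "w - y" "y - x"] by simp
            moreover have "norm (Y s - y) \<le> 2 * s * K" using bnd s0 by simp
            ultimately show ?thesis unfolding w_def e_def by linarith
          qed
          have "min_time f U w \<le> ereal (\<theta> - s)" unfolding w_def
            by (rule min_time_shift[OF adm tr Y0]) (use s0 \<tau>0 in \<open>auto simp: s_def\<close>)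
          then have up: "\<zeta> \<bullet> (w - x) \<le> \<sigma>0 * W^2" unfolding W_def by (intro \<sigma>0b) (simp add: s_def)
          have weq: "w - y = integral {0..s} (\<lambda>r. f (Y r) (u r))"
            using traj_eq[OF tr, of s] s0 unfolding w_def by simp
          have lo: "s * (hh - Z * (L * (e + 2 * s * K))) \<le> \<zeta> \<bullet> integral {0..s} (\<lambda>r. f (Y r) (u r))"
          proof (rule int_inner_ge)
            show "(\<lambda>r. f (Y r) (u r)) integrable_on {0..s}" using traj_int[OF tr] s0 by simp
            show "0 \<le> s" using s0 by simp
            show "\<forall>r\<in>{0..s}. hh - Z * (L * (e + 2 * s * K)) \<le> \<zeta> \<bullet> f (Y r) (u r)"
            proof
              fix r assume r: "r \<in> {0..s}"
              have uU: "u r \<in> U" using uUof[OF adm] r by auto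
              have "norm (Y r - x) \<le> norm (Y r - y) + norm (y - x)" using norm_triangle_ineq[of "Y r - y" "y - x"] by simp
              then have "norm (Y r - x) \<le> e + 2 * s * K" using bnd r unfolding e_def by fastforce
              then have "Z * (L * norm (Y r - x)) \<le> Z * (L * (e + 2 * s * K))"
                using Z0 L0 by (intro mult_left_mono) auto
              then show "hh - Z * (L * (e + 2 * s * K)) \<le> \<zeta> \<bullet> f (Y r) (u r)"
                using ilip(1)[OF uU, where a="Y r" and b=x] hmin[OF uU] by linarith
            qed
          qed
          have Aeq: "A = \<zeta> \<bullet> (w - x) - \<zeta> \<bullet> integral {0..s} (\<lambda>r. f (Y r) (u r)) + hh * d"
            unfolding A_def using weq by (simp add: inner_diff_right algebra_simps)
          have hd: "hh * (d - s) \<le> Hh * d^2"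
          proof -
            have "- (d^2) \<le> d - s" using th s_def d_def by linarith
            then have "hh * (d - s) \<le> hh * (- (d^2))" using hle by (intro mult_left_mono_neg) auto
            then show ?thesis unfolding Hh_def by simp
          qed
          have "A \<le> \<sigma>0 * W^2 + Hh * d^2 + s * (Z * L * (e + 2 * s * K))"
          proof -
            have e5: "s * (hh - Z * (L * (e + 2 * s * K))) = s * hh - s * (Z * L * (e + 2 * s * K))"
              by (simp add: algebra_simps)
            have e6: "hh * (d - s) = hh * d - s * hh" by (simp add: algebra_simps)
            show ?thesis using Aeq up lo hd e5 e6 by linarith
          qed
          then have "A \<le> (2*\<sigma>0 + 32*\<sigma>0*K^2 + 2*Z*L + 8*Z*L*K + Hh) * (e^2 + d^2)"
            using arith2[OF \<sigma>0 Z0 L0 K0 e0 _ _ Hh0 s2d _ W] s0 by (simp add: W_def)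
          then show ?thesis unfolding \<sigma>n_def .
        qed
      qed
      also have "\<dots> \<le> \<sigma> * (e^2 + d^2)" unfolding \<sigma>eq using fa n0 by (intro mult_right_mono) auto
      finally show ?thesis .
    qed
    then show ?thesis unfolding A_def e_def d_def .
  qed
  have \<sigma>pos: "0 \<le> \<sigma>" unfolding \<sigma>_def using Z0 Hh0 \<delta>0 \<sigma>0 L0 K0 by simp
  have partb: "(\<zeta>, hh) \<in> proximal_normal (epigraph (min_time f U)) (x, \<tau>)"
    unfolding proximal_normal_def
  proof (intro CollectI exI[of _ \<sigma>] conjI ballI)
    show "0 \<le> \<sigma>" by (rule \<sigma>pos)
    fix p assume p: "p \<in> epigraph (min_time f U)"
    obtain y \<beta> where py: "p = (y, \<beta>)" by (cases p)
    have yb: "min_time f U y \<le> ereal \<beta>" using p py unfolding epigraph_def by simp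
    have n: "(norm (p - (x, \<tau>)))\<^sup>2 = (norm (y - x))\<^sup>2 + (\<beta> - \<tau>)\<^sup>2"
      unfolding py by (simp add: norm_Pair)
    show "(\<zeta>, hh) \<bullet> (p - (x, \<tau>)) \<le> \<sigma> * (norm (p - (x, \<tau>)))\<^sup>2"
      unfolding n using core[OF yb] py by simp
  qed
  show ?thesis using hle partb hdef Txr by simp
qed

end
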